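(* Let $K$ be a field of characteristic $0$, let $E$ be the infinite-dimensional unitary Grassmann algebra over $K$ with even part $E_0$, let $A=\begin{pmatrix} E_0 & E\\ 0 & E\end{pmatrix}$, and let $F_n(A)=K\langle x_1,\dots,x_n\rangle/(K\langle x_1,\dots,x_n\rangle\cap T(A))$. Let $n\geq 2$ be even and $m\geq n+2$. Then the polynomial \[f_{m,n+1}^{(3)}=\sum_{\sigma\in S_{n+1}}(-1)^{\sigma}[x_{\sigma(1)},x_1,\dots,x_1][x_{\sigma(2)},x_{\sigma(3)}]\cdots[x_{\sigma(n)},x_{\sigma(n+1)}],\] where each first factor is the left-normed commutator of length $m-n$ consisting of $x_{\sigma(1)}$ followed by $m-n-1$ copies of $x_1$, is not a polynomial identity of $F_n(A)$.
   Context: All algebras are associative and unitary over $K$; $T(A)$ is the ideal of polynomial identities of $A$. $E$ is generated by anticommuting $e_1,e_2,\dots$ and $E_0$ is the span of basis products of even length. Commutators: $[a,b]=ab-ba$, $[a_1,\dots,a_k]=[[a_1,\dots,a_{k-1}],a_k]$; $(-1)^\sigma$ is the sign of $\sigma$. The polynomial has total degree $m$. *)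

theory Defs
  imports Main "HOL-Combinatorics.Permutations"
begin

text \<open>An element of E is a coefficient function on finite subsets S of nat;
  S = {i1 < ... < ik} stands for the basis monomial e_i1 ... e_ik.\<close>

type_synonym 'k grass = "nat set \<Rightarrow> 'k"

definition gsign :: "nat set \<Rightarrow> nat set \<Rightarrow> 'k::comm_ring_1" where
  "gsign S T = (-1) ^ card {(s,t). s \<in> S \<and> t \<in> T \<and> t < s}"

definition gmul :: "'k::comm_ring_1 grass \<Rightarrow> 'k grass \<Rightarrow> 'k grass" where
  "gmul x y = (\<lambda>U. if finite U then (\<Sum>S\<in>Pow U. gsign S (U - S) * x S * y (U - S)) else 0)"

definition gadd :: "'k::comm_ring_1 grass \<Rightarrow> 'k grass \<Rightarrow> 'k grass" where
  "gadd x y = (\<lambda>U. x U + y U)"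

definition gscale :: "'k::comm_ring_1 \<Rightarrow> 'k grass \<Rightarrow> 'k grass" where
  "gscale c x = (\<lambda>U. c * x U)"

definition gzero :: "'k::comm_ring_1 grass" where
  "gzero = (\<lambda>U. 0)"

definition gone :: "'k::comm_ring_1 grass" where
  "gone = (\<lambda>U. if U = {} then 1 else 0)"

definition Egr :: "'k::comm_ring_1 grass set" where
  "Egr = {x. finite {S. x S \<noteq> 0} \<and> (\<forall>S. x S \<noteq> 0 \<longrightarrow> finite S)}"

definition E0gr :: "'k::comm_ring_1 grass set" where
  "E0gr = {x \<in> Egr. \<forall>S. x S \<noteq> 0 \<longrightarrow> even (card S)}"

text \<open>(a, b, c) stands for the matrix with rows (a b) and (0 c).\<close>
type_synonym 'k utm = "'k grass \<times> 'k grass \<times> 'k grass"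

definition Acar :: "'k::comm_ring_1 utm set" where
  "Acar = {(a, b, c). a \<in> E0gr \<and> b \<in> Egr \<and> c \<in> Egr}"

definition amul :: "'k::comm_ring_1 utm \<Rightarrow> 'k utm \<Rightarrow> 'k utm" where
  "amul x y = (case x of (a, b, c) \<Rightarrow> case y of (a', b', c') \<Rightarrow>
      (gmul a a', gadd (gmul a b') (gmul b c'), gmul c c'))"

definition aadd :: "'k::comm_ring_1 utm \<Rightarrow> 'k utm \<Rightarrow> 'k utm" where
  "aadd x y = (case x of (a, b, c) \<Rightarrow> case y of (a', b', c') \<Rightarrow>
      (gadd a a', gadd b b', gadd c c'))"

definition ascale :: "'k::comm_ring_1 \<Rightarrow> 'k utm \<Rightarrow> 'k utm" where
  "ascale k x = (case x of (a, b, c) \<Rightarrow> (gscale k a, gscale k b, gscale k c))"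

definition asub :: "'k::comm_ring_1 utm \<Rightarrow> 'k utm \<Rightarrow> 'k utm" where
  "asub x y = aadd x (ascale (-1) y)"

definition azero :: "'k::comm_ring_1 utm" where
  "azero = (gzero, gzero, gzero)"

definition aone :: "'k::comm_ring_1 utm" where
  "aone = (gone, gzero, gone)"

definition asum :: "'i set \<Rightarrow> ('i \<Rightarrow> 'k::comm_ring_1 utm) \<Rightarrow> 'k utm" where
  "asum I F = ((\<lambda>S. \<Sum>i\<in>I. fst (F i) S),
               (\<lambda>S. \<Sum>i\<in>I. fst (snd (F i)) S),
               (\<lambda>S. \<Sum>i\<in>I. snd (snd (F i)) S))"

definition acomm :: "'k::comm_ring_1 utm \<Rightarrow> 'k utm \<Rightarrow> 'k utm" where
  "acomm x y = asub (amul x y) (amul y x)"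

fun lcomm :: "'k::comm_ring_1 utm \<Rightarrow> 'k utm \<Rightarrow> nat \<Rightarrow> 'k utm" where
  "lcomm y z 0 = y"
| "lcomm y z (Suc k) = acomm (lcomm y z k) z"

fun pairprod :: "(nat \<Rightarrow> 'k::comm_ring_1 utm) \<Rightarrow> (nat \<Rightarrow> nat) \<Rightarrow> nat \<Rightarrow> 'k utm" where
  "pairprod y s 0 = aone"
| "pairprod y s (Suc k) = amul (pairprod y s k) (acomm (y (s (2*k+2))) (y (s (2*k+3))))"

text \<open>Value of f^(3)_{m,n+1} at x_j := y j (j = 1..n+1).\<close>
definition fval :: "nat \<Rightarrow> nat \<Rightarrow> (nat \<Rightarrow> 'k::comm_ring_1 utm) \<Rightarrow> 'k utm" where
  "fval m n y = asum {s. s permutes {1..n+1}}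
     (\<lambda>s. ascale (of_int (sign s))
            (amul (lcomm (y (s 1)) (y 1) (m - n - 1)) (pairprod y s (n div 2))))"

datatype 'k ncpoly = Var nat | Const 'k | Add "'k ncpoly" "'k ncpoly" | Mul "'k ncpoly" "'k ncpoly"

fun ncvars :: "'k ncpoly \<Rightarrow> nat set" where
  "ncvars (Var i) = {i}"
| "ncvars (Const c) = {}"
| "ncvars (Add p q) = ncvars p \<union> ncvars q"
| "ncvars (Mul p q) = ncvars p \<union> ncvars q"

fun nceval :: "(nat \<Rightarrow> 'k::comm_ring_1 utm) \<Rightarrow> 'k ncpoly \<Rightarrow> 'k utm" where
  "nceval a (Var i) = a i"
| "nceval a (Const c) = ascale c aone"
| "nceval a (Add p q) = aadd (nceval a p) (nceval a q)"
| "nceval a (Mul p q) = amul (nceval a p) (nceval a q)"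

text \<open>A polynomial (given by its value function fv on (n+1)-tuples indexed 1..n+1)
  is a PI of F_n(A) = K<x_1..x_n>/(K<x_1..x_n> \<inter> T(A)) iff for every choice of
  elements p_j of K<x_1..x_n> (representatives of elements of F_n(A)), the
  substituted polynomial f(p_1,...,p_{n+1}) lies in T(A), i.e. vanishes under
  every evaluation of the variables in A.\<close>
definition PI_of_FnA :: "nat \<Rightarrow> ((nat \<Rightarrow> 'k::comm_ring_1 utm) \<Rightarrow> 'k utm) \<Rightarrow> bool" where
  "PI_of_FnA n fv \<longleftrightarrow>
     (\<forall>p :: nat \<Rightarrow> 'k ncpoly. (\<forall>j. ncvars (p j) \<subseteq> {1..n}) \<longrightarrow>
        (\<forall>a. (\<forall>i. a i \<in> Acar) \<longrightarrow> fv (\<lambda>j. nceval a (p j)) = azero))"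

end

theory Submission
  imports Defs
begin



definition sgn2 :: "nat \<Rightarrow> nat \<Rightarrow> 'k::comm_ring_1" where
  "sgn2 u v = (if v < u then -1 else 1)"
definition PR :: "nat set \<Rightarrow> (nat \<times> nat) set" where
  "PR S = {(i,j). i \<in> S \<and> j \<in> S \<and> i < j}"
definition cinv :: "nat set \<Rightarrow> (nat \<Rightarrow> nat) \<Rightarrow> int" where
  "cinv S f = (\<Prod>(i,j)\<in>PR S. sgn2 (f i) (f j))"
definition tp :: "(nat \<Rightarrow> nat) \<Rightarrow> nat \<Rightarrow> nat \<Rightarrow> int" where
  "tp p u v = (if (v < u) = (p v < p u) then 1 else -1)"

lemma finite_PR: "finite S \<Longrightarrow> finite (PR S)"
  unfolding PR_def by (rule finite_subset[of _ "S \<times> S"]) auto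

lemma sgn2_tp: "(sgn2 (p u) (p v) :: int) = sgn2 u v * tp p u v"
  unfolding sgn2_def tp_def by auto

lemma tp_sym: "u \<noteq> v \<Longrightarrow> p u \<noteq> p v \<Longrightarrow> tp p u v = tp p v u"
  unfolding tp_def by (cases "u < v"; cases "p u < p v") auto

lemma reindex_tp:
  assumes fin: "finite S" and q: "q permutes S" and p: "inj p"
  shows "(\<Prod>(i,j)\<in>PR S. tp p (q i) (q j)) = (\<Prod>(u,v)\<in>PR S. tp p u v)"
proof (rule prod.reindex_bij_witness[where j = "\<lambda>(i,j). (min (q i) (q j), max (q i) (q j))"
      and i = "\<lambda>(u,v). (min (inv q u) (inv q v), max (inv q u) (inv q v))"])
  have qi: "\<And>x. inv q (q x) = x" "\<And>x. q (inv q x) = x"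
    using permutes_inverses[OF q] by auto
  have qin: "\<And>x. x \<in> S \<Longrightarrow> q x \<in> S" "\<And>x. x \<in> S \<Longrightarrow> inv q x \<in> S"
    using permutes_in_image[OF q] permutes_in_image[OF permutes_inv[OF q]] by auto
  have qinj: "\<And>x y. q x = q y \<Longrightarrow> x = y" "\<And>x y. inv q x = inv q y \<Longrightarrow> x = y"
    by (metis qi(1)) (metis qi(2))
  fix a assume a: "a \<in> PR S"
  then obtain i j where ij: "a = (i,j)" "i \<in> S" "j \<in> S" "i < j" unfolding PR_def by auto
  show "(\<lambda>(u, v). (min (inv q u) (inv q v), max (inv q u) (inv q v)))
          ((\<lambda>(i, j). (min (q i) (q j), max (q i) (q j))) a) = a"
    using ij qi by (cases "q i < q j") (auto simp: min_def max_def)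
  show "(\<lambda>(i, j). (min (q i) (q j), max (q i) (q j))) a \<in> PR S"
    using ij qin qinj(1)[of i j] by (cases "q i < q j") (auto simp: PR_def min_def max_def)
  show "(case (\<lambda>(i, j). (min (q i) (q j), max (q i) (q j))) a of (u, v) \<Rightarrow> tp p u v) =
        (case a of (i, j) \<Rightarrow> tp p (q i) (q j))"
    using ij qinj(1)[of i j] tp_sym[of "q i" "q j" p] injD[OF p]
    by (cases "q i < q j") (auto simp: min_def max_def, metis)
next
  have qi: "\<And>x. inv q (q x) = x" "\<And>x. q (inv q x) = x"
    using permutes_inverses[OF q] by auto
  have qin: "\<And>x. x \<in> S \<Longrightarrow> q x \<in> S" "\<And>x. x \<in> S \<Longrightarrow> inv q x \<in> S"
    using permutes_in_image[OF q] permutes_in_image[OF permutes_inv[OF q]] by auto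
  have qinj: "\<And>x y. inv q x = inv q y \<Longrightarrow> x = y"
    by (metis qi(2))
  fix b assume b: "b \<in> PR S"
  then obtain u v where uv: "b = (u,v)" "u \<in> S" "v \<in> S" "u < v" unfolding PR_def by auto
  show "(\<lambda>(i, j). (min (q i) (q j), max (q i) (q j)))
          ((\<lambda>(u, v). (min (inv q u) (inv q v), max (inv q u) (inv q v))) b) = b"
    using uv qi by (cases "inv q u < inv q v") (auto simp: min_def max_def)
  show "(\<lambda>(u, v). (min (inv q u) (inv q v), max (inv q u) (inv q v))) b \<in> PR S"
    using uv qin qinj[of u v] by (cases "inv q u < inv q v") (auto simp: PR_def min_def max_def)
qed

lemma cinv_mult:
  assumes fin: "finite S" and p: "p permutes S" and q: "q permutes S"
  shows "cinv S (p \<circ> q) = cinv S p * cinv S q"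
proof -
  have injp: "inj p" using p permutes_inj by blast
  have "cinv S (p \<circ> q) = (\<Prod>(i,j)\<in>PR S. sgn2 (q i) (q j) * tp p (q i) (q j))"
    unfolding cinv_def by (intro prod.cong) (auto simp: sgn2_tp)
  also have "\<dots> = cinv S q * (\<Prod>(i,j)\<in>PR S. tp p (q i) (q j))"
    unfolding cinv_def prod.distrib[symmetric] by (intro prod.cong) auto
  also have "(\<Prod>(i,j)\<in>PR S. tp p (q i) (q j)) = (\<Prod>(u,v)\<in>PR S. tp p u v)"
    by (rule reindex_tp[OF fin q injp])
  also have "\<dots> = cinv S p"
    unfolding cinv_def by (intro prod.cong) (auto simp: PR_def sgn2_tp sgn2_def)
  finally show ?thesis by (simp add: o_def mult.commute)
qed

lemma cinv_id: "cinv S id = 1"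
  unfolding cinv_def by (intro prod.neutral) (auto simp: PR_def sgn2_def)

lemma adj_order: "i < j \<Longrightarrow> (i,j) \<noteq> (a, Suc a) \<Longrightarrow>
   Transposition.transpose a (Suc a) i < Transposition.transpose a (Suc a) j"
  unfolding transpose_def by (cases "i = a"; cases "i = Suc a"; cases "j = a"; cases "j = Suc a") auto

lemma cinv_adj:
  assumes "finite S" "a \<in> S" "Suc a \<in> S"
  shows "cinv S (Transposition.transpose a (Suc a)) = -1"
proof -
  have "cinv S (Transposition.transpose a (Suc a)) = (\<Prod>x\<in>PR S. if x = (a, Suc a) then -1 else 1)"
    unfolding cinv_def
  proof (intro prod.cong refl)
    fix x assume x: "x \<in> PR S"
    then obtain i j where ij: "x = (i,j)" "i < j" unfolding PR_def by auto
    show "(case x of (i, j) \<Rightarrow> sgn2 (Transposition.transpose a (Suc a) i) (Transposition.transpose a (Suc a) j)) =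
          (if x = (a, Suc a) then -1 else (1::int))"
    proof (cases "x = (a, Suc a)")
      case True then show ?thesis by (simp add: sgn2_def)
    next
      case False then show ?thesis using adj_order[of i j a] ij by (simp add: sgn2_def)
    qed
  qed
  also have "\<dots> = -1" using assms by (subst prod.delta) (auto simp: finite_PR, auto simp: PR_def)
  finally show ?thesis .
qed

lemma cinv_transp:
  assumes fin: "finite S" and S: "\<And>x. lo \<le> x \<Longrightarrow> x < hi \<Longrightarrow> x \<in> S"
    and ab: "lo \<le> a" "a < b" "b < hi"
  shows "cinv S (Transposition.transpose a b) = -1"
proof -
  have "\<forall>b. a < b \<longrightarrow> b = a + Suc d \<longrightarrow> b < hi \<longrightarrow> cinv S (Transposition.transpose a b) = -1" for d
  proof (induction d)
    case 0
    show ?case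
    proof (intro allI impI)
      fix b assume b: "a < b" "b = a + Suc 0" "b < hi"
      then have "b = Suc a" by simp
      moreover have "a \<in> S" "Suc a \<in> S" using S ab b by auto
      ultimately show "cinv S (Transposition.transpose a b) = -1" using cinv_adj[OF fin, of a] by simp
    qed
  next
    case (Suc d)
    show ?case
    proof (intro allI impI)
      fix b assume b: "a < b" "b = a + Suc (Suc d)" "b < hi"
      define b' where "b' = a + Suc d"
      have bb: "b = Suc b'" using b b'_def by simp
      have e: "Transposition.transpose a b = Transposition.transpose b' b \<circ> Transposition.transpose a b' \<circ> Transposition.transpose b' b"
        using b b'_def by (intro ext) (simp add: transpose_def)
      have inS: "a \<in> S" "b \<in> S" "b' \<in> S" using S ab b b'_def by auto
      have c1: "cinv S (Transposition.transpose a b') = -1" using Suc.IH b b'_def by simp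
      have c2: "cinv S (Transposition.transpose b' b) = -1" using cinv_adj[OF fin, of b'] inS bb by simp
      have pm: "Transposition.transpose a b' permutes S" "Transposition.transpose b' b permutes S"
        using inS by (auto intro: permutes_swap_id)
      show "cinv S (Transposition.transpose a b) = -1"
        unfolding e using pm c1 c2
        by (simp add: cinv_mult[OF fin] permutes_compose)
    qed
  qed
  moreover obtain d where "b = a + Suc d" using less_imp_Suc_add[OF ab(2)] by auto
  ultimately show ?thesis using ab by blast
qed

lemma sign_cinv:
  assumes p: "p permutes {lo..<hi}"
  shows "sign p = cinv {lo..<hi} p"
  using p finite_atLeastLessThan
proof (induction rule: permutes_induct)
  case id
  then show ?case using cinv_id[of "{lo..<hi}"] by (simp add: id_def)
next
  case (swap a b p)
  have pm: "permutation (Transposition.transpose a b)" "permutation p"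
    using swap by (auto intro: permutation_permutes permutes_swap_id simp: permutation_permutes)
  have s1: "sign (Transposition.transpose a b \<circ> p) = - sign p"
    using swap by (simp add: sign_compose[OF pm] sign_swap_id)
  have ct: "cinv {lo..<hi} (Transposition.transpose a b) = -1"
  proof (cases "a < b")
    case True then show ?thesis using swap by (intro cinv_transp[of _ lo hi]) auto
  next
    case False then have "b < a" using swap by simp
    then have "cinv {lo..<hi} (Transposition.transpose b a) = -1"
      using swap by (intro cinv_transp[of _ lo hi]) auto
    then show ?thesis by (simp add: transpose_commute)
  qed
  have "cinv {lo..<hi} (Transposition.transpose a b \<circ> p) = - cinv {lo..<hi} p"
    using swap ct by (simp add: cinv_mult permutes_swap_id)
  then show ?case using s1 swap by (simp add: o_def)
qed





definition sm :: "'k::comm_ring_1 \<Rightarrow> nat set \<Rightarrow> 'k grass" where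
  "sm c S = (\<lambda>U. if U = S then c else 0)"

lemma gsign_empty1 [simp]: "gsign {} U = 1" unfolding gsign_def by simp
lemma gsign_empty2 [simp]: "gsign U {} = 1" unfolding gsign_def by simp

lemma gmul_sm:
  assumes "finite S" "finite T"
  shows "gmul (sm c S) (sm d T) = sm (if S \<inter> T = {} then c*d*gsign S T else 0) (S \<union> T)"
proof (rule ext)
  fix U
  show "gmul (sm c S) (sm d T) U = sm (if S \<inter> T = {} then c*d*gsign S T else 0) (S \<union> T) U"
  proof (cases "finite U")
    case False
    then show ?thesis using assms by (auto simp: gmul_def sm_def)
  next
    case True
    have "gmul (sm c S) (sm d T) U = (\<Sum>S'\<in>Pow U. if S' = S then gsign S (U - S) * c * sm d T (U - S) else 0)"
      unfolding gmul_def if_P[OF True] by (intro sum.cong) (auto simp: sm_def)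
    also have "\<dots> = (if S \<subseteq> U then gsign S (U - S) * c * sm d T (U - S) else 0)"
      using True by (subst sum.delta) auto
    also have "\<dots> = sm (if S \<inter> T = {} then c*d*gsign S T else 0) (S \<union> T) U"
    proof (cases "S \<subseteq> U \<and> U - S = T")
      case True
      then have "U = S \<union> T" "S \<inter> T = {}" by auto
      then show ?thesis using True by (auto simp: sm_def)
    next
      case False
      have "U \<noteq> S \<union> T \<or> S \<inter> T \<noteq> {}" using False by auto
      then show ?thesis using False by (auto simp: sm_def)
    qed
    finally show ?thesis .
  qed
qed

lemma gmul_at_empty: "gmul x y {} = x {} * y {}"
  unfolding gmul_def by simp

lemma gmul_zero_left [simp]: "gmul gzero x = gzero"
  unfolding gmul_def gzero_def by (auto simp: fun_eq_iff)
lemma gmul_zero_right [simp]: "gmul x gzero = gzero"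
  unfolding gmul_def gzero_def by (auto simp: fun_eq_iff)

lemma gmul_sc_left: "gmul (sm c {}) x U = (if finite U then c * x U else 0)"
proof (cases "finite U")
  case True
  have "gmul (sm c {}) x U = (\<Sum>S\<in>Pow U. if S = {} then c * x U else 0)"
    unfolding gmul_def if_P[OF True] by (intro sum.cong) (auto simp: sm_def)
  also have "\<dots> = c * x U" using True by (subst sum.delta) auto
  finally show ?thesis using True by simp
qed (simp add: gmul_def)

lemma gmul_sc_right: "gmul x (sm c {}) U = (if finite U then x U * c else 0)"
proof (cases "finite U")
  case True
  have "gmul x (sm c {}) U = (\<Sum>S\<in>Pow U. if S = U then x U * c else 0)"
    unfolding gmul_def if_P[OF True] by (intro sum.cong) (auto simp: sm_def)
  also have "\<dots> = x U * c" using True by (subst sum.delta) auto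
  finally show ?thesis using True by simp
qed (simp add: gmul_def)

lemma gmul_top:
  assumes "finite T"
  shows "gmul x (sm c T) T = x {} * c"
proof -
  have "gmul x (sm c T) T = (\<Sum>S\<in>Pow T. if S = {} then x {} * c else 0)"
    unfolding gmul_def if_P[OF assms] by (intro sum.cong) (auto simp: sm_def)
  also have "\<dots> = x {} * c" using assms by (subst sum.delta) auto
  finally show ?thesis .
qed

lemma gsign_prod:
  assumes "finite S" "finite T"
  shows "gsign S T = (\<Prod>u\<in>S. \<Prod>v\<in>T. (sgn2 u v :: 'k::comm_ring_1))"
proof -
  have e: "{(s,t). s \<in> S \<and> t \<in> T \<and> t < s} = {z \<in> S \<times> T. snd z < fst z}" by auto
  have "gsign S T = (\<Prod>z\<in>{z \<in> S \<times> T. snd z < fst z}. (-1::'k))"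
    unfolding gsign_def e by simp
  also have "\<dots> = (\<Prod>z\<in>S \<times> T. if snd z < fst z then -1 else 1)"
    using assms by (subst prod.inter_filter) auto
  also have "\<dots> = (\<Prod>u\<in>S. \<Prod>v\<in>T. (sgn2 u v :: 'k))"
    unfolding sgn2_def by (subst prod.cartesian_product) (simp add: case_prod_unfold)
  finally show ?thesis .
qed

lemma gsign_single: "gsign {a} {b} = sgn2 a b"
  by (simp add: gsign_prod)



lemma amul_c: "fst (amul x y) = gmul (fst x) (fst y)"
  "fst (snd (amul x y)) = gadd (gmul (fst x) (fst (snd y))) (gmul (fst (snd x)) (snd (snd y)))"
  "snd (snd (amul x y)) = gmul (snd (snd x)) (snd (snd y))"
  by (cases x; cases y; simp add: amul_def)+

lemma acomm_c: "fst (acomm x y) = gadd (gmul (fst x) (fst y)) (gscale (-1) (gmul (fst y) (fst x)))"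
  "fst (snd (acomm x y)) = gadd (gadd (gmul (fst x) (fst (snd y))) (gmul (fst (snd x)) (snd (snd y))))
       (gscale (-1) (gadd (gmul (fst y) (fst (snd x))) (gmul (fst (snd y)) (snd (snd x)))))"
  "snd (snd (acomm x y)) = gadd (gmul (snd (snd x)) (snd (snd y))) (gscale (-1) (gmul (snd (snd y)) (snd (snd x))))"
  by (cases x; cases y; simp add: acomm_def asub_def aadd_def ascale_def amul_def)+

lemma gzero_apply: "gzero U = 0" by (simp add: gzero_def)

lemma gadd_sm: "gadd (sm c S) (sm d S) = sm (c+d) S" by (auto simp: gadd_def sm_def)
lemma gscale_sm: "gscale k (sm c S) = sm (k*c) S" by (auto simp: gscale_def sm_def)
lemma sm_0: "sm 0 S = gzero" by (auto simp: gzero_def sm_def)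
lemma gone_sm: "gone = sm 1 {}" by (auto simp: gone_def sm_def)
lemma gzero_sm: "gzero = sm 0 {}" by (auto simp: gzero_def sm_def)

definition aa :: "nat \<Rightarrow> 'k::comm_ring_1 utm" where
  "aa i = (if i = 1 then (sm (-1) {}, gzero, sm 1 {1})
           else if i = 2 then (gzero, sm 1 {}, sm 1 {2})
           else (gzero, gzero, sm 1 {i}))"

definition yN :: "'k::comm_ring_1 utm" where
  "yN = (gzero, sm (-1) {}, sm 1 {1,2})"

definition yy :: "nat \<Rightarrow> nat \<Rightarrow> 'k::comm_ring_1 utm" where
  "yy n j = (if j = n+1 then yN else if 1 \<le> j \<and> j \<le> n then aa j else aa 1)"

definition pp :: "nat \<Rightarrow> nat \<Rightarrow> 'k ncpoly" where
  "pp n j = (if j = n+1 then Mul (Var 1) (Var 2) else if 1 \<le> j \<and> j \<le> n then Var j else Var 1)"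

lemma sgn2_12: "sgn2 1 2 = 1" by (simp add: sgn2_def)

lemma amul_a1a2: "amul (aa 1) (aa 2) = (yN :: 'k::comm_ring_1 utm)"
proof -
  have "gmul (sm 1 {1}) (sm 1 {2}) = (sm 1 {1,2} :: 'k grass)"
    by (simp add: gmul_sm gsign_single sgn2_def insert_commute)
  moreover have "gmul (sm (-1) {}) (sm 1 {}) = (sm (-1) {} :: 'k grass)"
    by (simp add: gmul_sm)
  moreover have "gadd (sm (-1) {}) gzero = (sm (-1) {} :: 'k grass)"
    by (simp add: gzero_sm gadd_sm)
  ultimately show ?thesis by (simp add: aa_def yN_def amul_def)
qed

lemma nceval_pp:
  assumes "n \<ge> 2"
  shows "(\<lambda>j. nceval aa (pp n j)) = (yy n :: nat \<Rightarrow> 'k::comm_ring_1 utm)"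
  using assms amul_a1a2 by (auto simp: pp_def yy_def fun_eq_iff)

lemma sm_Egr: "finite S \<Longrightarrow> sm c S \<in> Egr" unfolding Egr_def sm_def
  by (auto intro: finite_subset[of _ "{S}"])

lemma aa_Acar: "aa i \<in> Acar"
proof -
  have z: "gzero \<in> E0gr" "gzero \<in> Egr" by (auto simp: E0gr_def Egr_def gzero_def)
  have e: "sm c {} \<in> E0gr" for c :: 'a
    using sm_Egr[of "{}" c] by (auto simp: E0gr_def sm_def)
  show ?thesis using z e sm_Egr by (auto simp: aa_def Acar_def)
qed

lemma gadd_zero[simp]: "gadd gzero gzero = gzero" by (simp add: gadd_def gzero_def)
lemma gscale_zero[simp]: "gscale c gzero = gzero" by (simp add: gscale_def gzero_def)

lemma TL_acomm_a1: "fst z = sm c {} \<Longrightarrow> fst (acomm x z) = (gzero :: 'k::comm_ring_1 grass)"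
  by (simp add: acomm_c, auto simp:  fun_eq_iff gadd_def gscale_def gzero_def gmul_sc_left gmul_sc_right)

lemma TL_lcomm: "k \<ge> 1 \<Longrightarrow> fst z = sm c {} \<Longrightarrow> fst (lcomm x z k) = (gzero :: 'k::comm_ring_1 grass)"
  by (cases k) (auto simp: TL_acomm_a1)

lemma TR_lcomm_empty: "fst z = sm (-1) {} \<Longrightarrow> fst (snd z) = gzero \<Longrightarrow> snd (snd z) {} = 0 \<Longrightarrow>
   fst (snd (lcomm x z k)) {} = (fst (snd x) {} :: 'k::comm_ring_1)"
  by (induction k) (auto simp: acomm_c gadd_def gscale_def gmul_at_empty gzero_def sm_def)

lemma TR_lcomm_zero: "fst (snd z) = gzero \<Longrightarrow> fst (snd x) = gzero \<Longrightarrow> fst (snd (lcomm x z k)) = (gzero :: 'k::comm_ring_1 grass)"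
  by (induction k) (auto simp: acomm_c)

lemma BR_pairprod_0: "snd (snd (pairprod y s 0)) = sm 1 {}"
  by (simp add: aone_def gone_sm)

lemma BR_pairprod_Suc: "snd (snd (pairprod y s (Suc j))) =
   gmul (snd (snd (pairprod y s j))) (snd (snd (acomm (y (s (2*j+2))) (y (s (2*j+3))))))"
  by (simp add: amul_c)

lemma sgn2_swap: "a \<noteq> b \<Longrightarrow> sgn2 b a = - sgn2 a b" by (auto simp: sgn2_def)

lemma comm_single: "a \<noteq> b \<Longrightarrow>
  gadd (gmul (sm 1 {a}) (sm 1 {b})) (gscale (-1) (gmul (sm 1 {b}) (sm 1 {a}))) = (sm (2 * sgn2 a b) {a,b} :: 'k::comm_ring_1 grass)"
proof -
  assume ab: "a \<noteq> b"
  have u: "{a} \<union> {b} = {a,b}" "{b} \<union> {a} = {a,b}" "{a} \<inter> {b} = {}" "{b} \<inter> {a} = {}" using ab by auto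
  have "gmul (sm 1 {a}) (sm 1 {b}) = (sm (sgn2 a b) {a,b} :: 'k grass)"
    using gmul_sm[of "{a}" "{b}" 1 1] by (simp only: u gsign_single) simp
  moreover have "gmul (sm 1 {b}) (sm 1 {a}) = (sm (- sgn2 a b) {a,b} :: 'k grass)"
    using gmul_sm[of "{b}" "{a}" 1 1] by (simp only: u gsign_single sgn2_swap[OF ab]) simp
  ultimately show ?thesis by (simp add: gscale_sm gadd_sm)
qed

lemma BR_yy: "1 \<le> i \<Longrightarrow> i \<le> n \<Longrightarrow> snd (snd (yy n i)) = sm 1 {i}"
  by (auto simp: yy_def aa_def)

definition J :: "nat \<Rightarrow> nat \<Rightarrow> (nat \<Rightarrow> nat) \<Rightarrow> 'k::comm_ring_1" where
  "J lo hi f = (\<Prod>b\<in>{lo..<hi}. \<Prod>a\<in>{lo..<b}. sgn2 (f a) (f b))"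

lemma Q_formula:
  assumes sig: "\<sigma> permutes {1..n+1}" "\<sigma> 1 = n+1"
  shows "2*j \<le> n \<Longrightarrow> snd (snd (pairprod (yy n) \<sigma> j)) =
          (sm (2^j * J 2 (2*j+2) \<sigma>) (\<sigma> ` {2..<2*j+2}) :: 'k::comm_ring_1 grass)"
proof (induction j)
  case 0
  then show ?case by (simp add: aone_def gone_sm J_def)
next
  case (Suc j)
  have injs: "inj \<sigma>" using sig permutes_inj by blast
  have rng: "\<sigma> i \<in> {1..n}" if "2 \<le> i" "i \<le> n+1" for i
  proof -
    have "\<sigma> i \<in> {1..n+1}" using permutes_in_image[OF sig(1)] that by auto
    moreover have "\<sigma> i \<noteq> n+1" using sig(2) injD[OF injs, of i 1] that by auto
    ultimately show ?thesis by auto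
  qed
  define u where "u = \<sigma> (2*j+2)"
  define v where "v = \<sigma> (2*j+3)"
  define A where "A = \<sigma> ` {2..<2*j+2}"
  have u: "1 \<le> u" "u \<le> n" using rng[of "2*j+2"] Suc.prems u_def by auto
  have v: "1 \<le> v" "v \<le> n" using rng[of "2*j+3"] Suc.prems v_def by auto
  have uv: "u \<noteq> v" using injD[OF injs] u_def v_def by fastforce
  have Adis: "A \<inter> {u,v} = {}" using injD[OF injs] u_def v_def A_def by fastforce
  have finA: "finite A" unfolding A_def by simp
  have IH: "snd (snd (pairprod (yy n) \<sigma> j)) = (sm (2^j * J 2 (2*j+2) \<sigma>) A :: 'k grass)"
    using Suc A_def by simp
  have C: "snd (snd (acomm (yy n (\<sigma> (2*j+2))) (yy n (\<sigma> (2*j+3))))) = (sm (2 * sgn2 u v) {u,v} :: 'k grass)"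
    unfolding u_def[symmetric] v_def[symmetric] using u v uv by (simp add: acomm_c BR_yy comm_single)
  have gs: "gsign A {u,v} = (\<Prod>i\<in>{2..<2*j+2}. sgn2 (\<sigma> i) u * sgn2 (\<sigma> i) v :: 'k)"
  proof -
    have "gsign A {u,v} = (\<Prod>x\<in>A. \<Prod>w\<in>{u,v}. (sgn2 x w :: 'k))" using finA by (simp add: gsign_prod)
    also have "\<dots> = (\<Prod>x\<in>A. sgn2 x u * sgn2 x v)" using uv by simp
    also have "\<dots> = (\<Prod>i\<in>{2..<2*j+2}. sgn2 (\<sigma> i) u * sgn2 (\<sigma> i) v)"
      unfolding A_def by (subst prod.reindex) (auto intro: inj_on_subset[OF injs])
    finally show ?thesis .
  qed
  have e1: "2 * Suc j + 2 = Suc (Suc (2*j+2))" by simp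
  have JS: "J 2 (2 * Suc j + 2) \<sigma> = (J 2 (2*j+2) \<sigma> :: 'k) *
      (\<Prod>i\<in>{2..<2*j+2}. sgn2 (\<sigma> i) u * sgn2 (\<sigma> i) v) * sgn2 u v"
  proof -
    have a: "J 2 (2 * Suc j + 2) \<sigma> = (J 2 (2*j+2) \<sigma> :: 'k) * (\<Prod>a\<in>{2..<2*j+2}. sgn2 (\<sigma> a) u)
        * ((\<Prod>a\<in>{2..<2*j+2}. sgn2 (\<sigma> a) v) * sgn2 u v)"
      unfolding J_def e1 by (simp add: u_def v_def numeral_eq_Suc)
    show ?thesis unfolding a prod.distrib by (simp add: ac_simps)
  qed
  have img: "\<sigma> ` {2..<2 * Suc j + 2} = A \<union> {u,v}"
  proof -
    have "{2..<2 * Suc j + 2} = {2..<2*j+2} \<union> {2*j+2, 2*j+3}" by auto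
    then show ?thesis by (simp add: A_def u_def v_def)
  qed
  have G: "gmul (sm c A) (sm d {u,v}) = (sm (c*d*gsign A {u,v}) (A \<union> {u,v}) :: 'k grass)" for c d
    using gmul_sm[of A "{u,v}" c d] finA Adis by simp
  have co: "2^j * J 2 (2*j+2) \<sigma> * (2 * sgn2 u v) * gsign A {u,v} = (2^(Suc j) * J 2 (2 * Suc j + 2) \<sigma> :: 'k)"
    unfolding gs JS power_Suc by (simp only: ac_simps)
  show ?case
    unfolding BR_pairprod_Suc IH C img G co ..
qed

lemma comm_N_zero:
  assumes "x \<noteq> 2" "1 \<le> x"
  shows "gadd (gmul (sm 1 {1,2}) (sm 1 {x})) (gscale (-1) (gmul (sm 1 {x}) (sm 1 {1,2}))) = (gzero :: 'k::comm_ring_1 grass)"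
    and "gadd (gmul (sm 1 {x}) (sm 1 {1,2})) (gscale (-1) (gmul (sm 1 {1,2}) (sm 1 {x}))) = (gzero :: 'k::comm_ring_1 grass)"
proof -
  have "gsign {1,2} {x} = (1::'k)" "gsign {x} {1,2} = (1::'k)" if "x \<noteq> 1"
    using assms that by (auto simp: gsign_prod sgn2_def)
  then show "gadd (gmul (sm 1 {1,2}) (sm 1 {x})) (gscale (-1) (gmul (sm 1 {x}) (sm 1 {1,2}))) = (gzero :: 'k::comm_ring_1 grass)"
    and "gadd (gmul (sm 1 {x}) (sm 1 {1,2})) (gscale (-1) (gmul (sm 1 {1,2}) (sm 1 {x}))) = (gzero :: 'k::comm_ring_1 grass)"
    by (cases "x = 1"; simp add: gmul_sm gscale_sm gadd_sm sm_0 insert_commute)+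
qed

lemma BR_yN: "snd (snd (yy n (n+1))) = sm 1 {1,2}" by (simp add: yy_def yN_def)

lemma Q_zero:
  assumes sig: "\<sigma> permutes {1..n+1}" "\<sigma> 1 = 2" and n: "even n" "n \<ge> 2"
  shows "snd (snd (pairprod (yy n) \<sigma> (n div 2))) = (gzero :: 'k::comm_ring_1 grass)"
proof -
  have injs: "inj \<sigma>" using sig permutes_inj by blast
  have sur: "\<sigma> (inv \<sigma> y) = y" for y using permutes_inverses[OF sig(1)] by auto
  define i0 where "i0 = inv \<sigma> (n+1)"
  have i0: "\<sigma> i0 = n+1" using sur i0_def by simp
  have i0r: "i0 \<in> {1..n+1}"
    using permutes_in_image[OF permutes_inv[OF sig(1)]] i0_def by auto
  have i01: "i0 \<noteq> 1" using i0 sig(2) n by auto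
  define j0 where "j0 = (i0 - 2) div 2"
  have j0: "i0 = 2*j0+2 \<or> i0 = 2*j0+3" using i0r i01 j0_def by auto
  have j0h: "Suc j0 \<le> n div 2" using j0 i0r n by auto
  have rng: "\<sigma> i \<in> {1..n+1}" if "i \<in> {1..n+1}" for i
    using permutes_in_image[OF sig(1)] that by auto
  have other: "1 \<le> \<sigma> i \<and> \<sigma> i \<le> n \<and> \<sigma> i \<noteq> 2" if "i \<noteq> 1" "i \<noteq> i0" "i \<in> {1..n+1}" for i
  proof -
    have "\<sigma> i \<noteq> n+1" using injD[OF injs, of i i0] i0 that by auto
    moreover have "\<sigma> i \<noteq> 2" using injD[OF injs, of i 1] sig(2) that by auto
    ultimately show ?thesis using rng[of i] that by auto
  qed
  have F: "snd (snd (acomm (yy n (\<sigma> (2*j0+2))) (yy n (\<sigma> (2*j0+3))))) = (gzero :: 'k grass)"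
    using j0
  proof
    assume a: "i0 = 2*j0+2"
    have o: "1 \<le> \<sigma> (2*j0+3) \<and> \<sigma> (2*j0+3) \<le> n \<and> \<sigma> (2*j0+3) \<noteq> 2"
      using other[of "2*j0+3"] a j0h n by auto
    show ?thesis using a i0 o comm_N_zero(1)[of "\<sigma> (2*j0+3)"]
      by (simp add: acomm_c BR_yN BR_yy del: One_nat_def)
  next
    assume a: "i0 = 2*j0+3"
    have o: "1 \<le> \<sigma> (2*j0+2) \<and> \<sigma> (2*j0+2) \<le> n \<and> \<sigma> (2*j0+2) \<noteq> 2"
      using other[of "2*j0+2"] a j0h i0r by auto
    show ?thesis using a i0 o comm_N_zero(2)[of "\<sigma> (2*j0+2)"]
      by (simp add: acomm_c BR_yN BR_yy del: One_nat_def)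
  qed
  have "snd (snd (pairprod (yy n) \<sigma> (Suc j0 + d))) = (gzero :: 'k grass)" for d
  proof (induction d)
    case 0
    then show ?case using F by (simp add: amul_c)
  next
    case (Suc d)
    then show ?case by (simp add: amul_c)
  qed
  from this[of "n div 2 - Suc j0"] show ?thesis using j0h by simp
qed

lemma cinv_J: "(of_int (cinv {lo..<hi} f) :: 'k::comm_ring_1) = J lo hi f"
proof -
  have PR: "PR {lo..<hi} = (\<lambda>(b,a). (a,b)) ` (SIGMA b:{lo..<hi}. {lo..<b})"
    unfolding PR_def by (auto simp: image_iff)
  have inj: "inj_on (\<lambda>(b::nat,a::nat). (a,b)) X" for X by (auto simp: inj_on_def)
  have "cinv {lo..<hi} f = (\<Prod>(b,a)\<in>(SIGMA b:{lo..<hi}. {lo..<b}). sgn2 (f a) (f b))"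
    unfolding cinv_def PR by (subst prod.reindex[OF inj]) (simp add: case_prod_unfold)
  also have "\<dots> = (\<Prod>b\<in>{lo..<hi}. \<Prod>a\<in>{lo..<b}. sgn2 (f a) (f b))"
    by (subst prod.Sigma) auto
  finally have "(of_int (cinv {lo..<hi} f) :: 'k) = (\<Prod>b\<in>{lo..<hi}. \<Prod>a\<in>{lo..<b}. of_int (sgn2 (f a) (f b)))"
    by (simp add: of_int_prod)
  moreover have "(of_int (sgn2 u v :: int) :: 'k) = sgn2 u v" for u v by (simp add: sgn2_def)
  ultimately show ?thesis unfolding J_def by simp
qed

lemma J_sq: "J lo hi f * J lo hi f = (1::'k::comm_ring_1)"
  unfolding J_def prod.distrib[symmetric] by (intro prod.neutral ballI) (simp add: sgn2_def)

lemma J_shift: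
  assumes "\<sigma> 1 = n+1" "\<And>b. 2 \<le> b \<Longrightarrow> b < n+2 \<Longrightarrow> \<sigma> b \<le> n" "even n"
  shows "J 1 (n+2) \<sigma> = (J 2 (n+2) \<sigma> :: 'k::comm_ring_1)"
proof -
  have "J 1 (n+2) \<sigma> = (\<Prod>b\<in>{2..<n+2}. \<Prod>a\<in>{1..<b}. (sgn2 (\<sigma> a) (\<sigma> b) :: 'k))"
    unfolding J_def by (subst prod.atLeast_Suc_lessThan) (auto simp: numeral_2_eq_2)
  also have "\<dots> = (\<Prod>b\<in>{2..<n+2}. (-1) * (\<Prod>a\<in>{2..<b}. (sgn2 (\<sigma> a) (\<sigma> b) :: 'k)))"
  proof (intro prod.cong refl)
    fix b assume b: "b \<in> {2..<n+2}"
    have "(\<Prod>a\<in>{1..<b}. (sgn2 (\<sigma> a) (\<sigma> b) :: 'k)) = sgn2 (\<sigma> 1) (\<sigma> b) * (\<Prod>a\<in>{Suc 1..<b}. sgn2 (\<sigma> a) (\<sigma> b))"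
      using b by (subst prod.atLeast_Suc_lessThan) auto
    also have "sgn2 (\<sigma> 1) (\<sigma> b) = (-1 :: 'k)" using assms(1) assms(2)[of b] b by (simp add: sgn2_def)
    finally show "(\<Prod>a\<in>{1..<b}. (sgn2 (\<sigma> a) (\<sigma> b) :: 'k)) = (-1) * (\<Prod>a\<in>{2..<b}. sgn2 (\<sigma> a) (\<sigma> b))"
      by (simp add: numeral_2_eq_2)
  qed
  also have "\<dots> = (-1)^n * J 2 (n+2) \<sigma>" unfolding J_def prod.distrib by simp
  finally show ?thesis using assms(3) by simp
qed

lemma sq1: "x*x = (1::'a::comm_ring_1) \<Longrightarrow> x * (c * x) = c"
proof -
  assume a: "x*x = 1"
  have "x * (c * x) = c * (x * x)" by (simp only: ac_simps)
  then show ?thesis using a by simp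
qed

lemma TR_ascale: "fst (snd (ascale c x)) = gscale c (fst (snd x))"
  by (cases x) (simp add: ascale_def)

lemma term_val:
  fixes n m :: nat
  assumes n: "n \<ge> 2" "even n" and m: "m \<ge> n + 2" and sig: "\<sigma> permutes {1..n+1}"
  shows "fst (snd (ascale (of_int (sign \<sigma>))
            (amul (lcomm (yy n (\<sigma> 1)) (yy n 1) (m - n - 1)) (pairprod (yy n) \<sigma> (n div 2))))) {1..n}
         = (if \<sigma> 1 = n+1 then - (2^(n div 2)) else (0::'k::comm_ring_1))"
proof -
  define L :: "'k utm" where "L = lcomm (yy n (\<sigma> 1)) (yy n 1) (m - n - 1)"
  define P :: "'k utm" where "P = pairprod (yy n) \<sigma> (n div 2)"
  have y1: "yy n 1 = aa 1" using n by (simp add: yy_def)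
  have TL: "fst L = (gzero :: 'k grass)"
    unfolding L_def y1 using m by (intro TL_lcomm[of _ _ "-1"]) (auto simp: aa_def)
  have base: "fst (snd (ascale (of_int (sign \<sigma>)) (amul L P))) {1..n} =
      of_int (sign \<sigma>) * gmul (fst (snd L)) (snd (snd P)) {1..n}"
    by (simp add: TR_ascale amul_c TL gscale_def gadd_def) (simp add: gzero_def)
  have s1: "\<sigma> 1 \<in> {1..n+1}" using permutes_in_image[OF sig] by auto
  show ?thesis
  proof (cases "\<sigma> 1 = n+1")
    case True
    have injs: "inj \<sigma>" using sig permutes_inj by blast
    have rng: "\<sigma> b \<le> n" if "2 \<le> b" "b < n+2" for b
    proof -
      have "\<sigma> b \<in> {1..n+1}" using permutes_in_image[OF sig] that by auto
      moreover have "\<sigma> b \<noteq> n+1" using True injD[OF injs, of b 1] that by auto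
      ultimately show ?thesis by auto
    qed
    have h2: "2 * (n div 2) + 2 = n+2" using n by simp
    have img: "\<sigma> ` {2..<n+2} = {1..n}"
    proof -
      have "\<sigma> ` {1..n+1} = {1..n+1}" using permutes_image[OF sig] .
      moreover have "{1..n+1} = insert 1 {2..<n+2}" by auto
      ultimately have "insert (n+1) (\<sigma> ` {2..<n+2}) = {1..n+1}" using True by simp
      moreover have "n+1 \<notin> \<sigma> ` {2..<n+2}" using rng by force
      ultimately have "\<sigma> ` {2..<n+2} = {1..n+1} - {n+1}" by (metis Diff_insert_absorb)
      also have "\<dots> = {1..n}" by auto
      finally show ?thesis .
    qed
    have Q: "snd (snd P) = (sm (2^(n div 2) * J 2 (n+2) \<sigma>) {1..n} :: 'k grass)"
      unfolding P_def using Q_formula[OF sig True, of "n div 2"] h2 img by simp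
    have Lv: "fst (snd L) {} = (-1 :: 'k)"
      unfolding L_def y1 True
      by (subst TR_lcomm_empty) (auto simp: aa_def yy_def yN_def sm_def)
    have sg: "(of_int (sign \<sigma>) :: 'k) = J 2 (n+2) \<sigma>"
    proof -
      have "sign \<sigma> = cinv {1..<n+2} \<sigma>"
        using sign_cinv[of \<sigma> 1 "n+2"] sig by (simp add: atLeastLessThanSuc_atLeastAtMost[symmetric])
      then have "(of_int (sign \<sigma>) :: 'k) = J 1 (n+2) \<sigma>" by (simp add: cinv_J)
      also have "\<dots> = J 2 (n+2) \<sigma>" using J_shift[of \<sigma> n, OF True rng n(2)] by simp
      finally show ?thesis .
    qed
    have "fst (snd (ascale (of_int (sign \<sigma>)) (amul L P))) {1..n} = - (2^(n div 2) :: 'k)"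
      unfolding base unfolding Q gmul_top[OF finite_atLeastAtMost] Lv sg
      using sq1[OF J_sq[of 2 "n+2" \<sigma>]] by simp
    then show ?thesis using True unfolding L_def P_def by simp
  next
    case False
    note F = False
    show ?thesis
    proof (cases "\<sigma> 1 = 2")
      case True
      have "snd (snd P) = (gzero :: 'k grass)" unfolding P_def using Q_zero[OF sig True n(2) n(1)] .
      then have "fst (snd (ascale (of_int (sign \<sigma>)) (amul L P))) {1..n} = of_int (sign \<sigma>) * gzero {1..n}" using base by simp
      then have "fst (snd (ascale (of_int (sign \<sigma>)) (amul L P))) {1..n} = 0" by (simp add: gzero_apply)
      then show ?thesis using F unfolding L_def P_def by simp
    next
      case False
      have "fst (snd (yy n (\<sigma> 1))) = (gzero :: 'k grass)" using False F s1 by (auto simp: yy_def aa_def)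
      then have "fst (snd L) = (gzero :: 'k grass)" unfolding L_def y1
        by (intro TR_lcomm_zero) (auto simp: aa_def)
      then have "fst (snd (ascale (of_int (sign \<sigma>)) (amul L P))) {1..n} = of_int (sign \<sigma>) * gzero {1..n}" using base by simp
      then have "fst (snd (ascale (of_int (sign \<sigma>)) (amul L P))) {1..n} = 0" by (simp add: gzero_apply)
      then show ?thesis using F unfolding L_def P_def by simp
    qed
  qed
qed

lemma fval_TR:
  fixes n m :: nat
  assumes n: "n \<ge> 2" "even n" and m: "m \<ge> n + 2"
  shows "fst (snd (fval m n (yy n))) {1..n} =
     (- (2^(n div 2)) * of_nat (card {\<sigma>. \<sigma> permutes {1..n+1} \<and> \<sigma> 1 = n+1}) :: 'k::comm_ring_1)"
proof -
  have "fst (snd (fval m n (yy n))) {1..n} =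
     (\<Sum>\<sigma>\<in>{s. s permutes {1..n+1}}. (if \<sigma> 1 = n+1 then - (2^(n div 2)) else (0::'k)))"
    unfolding fval_def asum_def fst_conv snd_conv by (intro sum.cong refl) (rule term_val[OF n m], simp)
  also have "\<dots> = (\<Sum>\<sigma>\<in>{\<sigma>\<in>{s. s permutes {1..n+1}}. \<sigma> 1 = n+1}. - (2^(n div 2)))"
    by (subst sum.inter_filter) (auto simp: finite_permutations)
  also have "\<dots> = - (2^(n div 2)) * of_nat (card {\<sigma>. \<sigma> permutes {1..n+1} \<and> \<sigma> 1 = n+1})"
    by simp
  finally show ?thesis .
qed

theorem lemma3p7:
  fixes n m :: nat
  assumes "n \<ge> 2" and "even n" and "m \<ge> n + 2"
  shows "\<not> PI_of_FnA n (fval m n :: (nat \<Rightarrow> 'k::field_char_0 utm) \<Rightarrow> 'k utm)"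
proof
  assume PI: "PI_of_FnA n (fval m n :: (nat \<Rightarrow> 'k::field_char_0 utm) \<Rightarrow> 'k utm)"
  have vars: "\<forall>j. ncvars (pp n j :: 'k ncpoly) \<subseteq> {1..n}" using assms(1) by (auto simp: pp_def)
  have "fval m n (\<lambda>j. nceval aa (pp n j)) = (azero :: 'k utm)"
    using PI vars aa_Acar unfolding PI_of_FnA_def by blast
  moreover have "(\<lambda>j. nceval aa (pp n j)) = (yy n :: nat \<Rightarrow> 'k utm)" by (rule nceval_pp[OF assms(1)])
  ultimately have Z: "fval m n (yy n) = (azero :: 'k utm)" by simp
  define C where "C = {\<sigma>. \<sigma> permutes {1..n+1} \<and> \<sigma> 1 = n+1}"
  have fin: "finite C" unfolding C_def
    by (rule finite_subset[OF _ finite_permutations[of "{1..n+1}"]]) auto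
  have "Transposition.transpose 1 (n+1) \<in> C" unfolding C_def by (auto intro: permutes_swap_id)
  then have cne: "card C \<noteq> 0" using fin by auto
  have "fst (snd (fval m n (yy n))) {1..n} = (- (2^(n div 2)) * of_nat (card C) :: 'k)"
    unfolding C_def by (rule fval_TR[OF assms])
  moreover have "fst (snd (fval m n (yy n))) {1..n} = (0 :: 'k)" using Z by (simp add: azero_def gzero_def)
  ultimately show False using cne by simp
qed

end
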